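(* Let $f:(0,\infty)\to(0,\infty)$ be a strictly decreasing continuous bijection of $(0,\infty)$ onto $(0,\infty)$ (as is the case under (A)). Let $F:(0,\infty)\to(0,\infty)$ be a function that is continuous and strictly decreasing on some interval $[r_1,\infty)$, and suppose there exist $r_0>0$ and $0<a<2$ with $$f^2(r)\le F(r)\le f^a(r),\qquad r>r_0.$$ Let $\kappa,\widetilde\kappa>0$, let $\alpha(u)=(f^2)^{-1}(\kappa/u)$ and $\tau(u)=F^{-1}(\widetilde\kappa/u)$ for $u$ large enough (where $F^{-1}$ is the inverse of $F$ restricted to $[r_1,\infty)$). Let $m:(0,\infty)\to(0,\infty)$ be eventually increasing and let $\omega\ge0$ be such that for every $c>0$ and $\lambda\ge1$, $$\limsup_{s\to0^+}\frac{m\big(f^{-1}(cs^\lambda)\big)}{m\big(f^{-1}(s)\big)}\le\lambda^\omega. \qquad (\ast)$$ Then $$1\le\liminf_{u\to\infty}\frac{m(\tau(u))}{m(\alpha(u))}\le\limsup_{u\to\infty}\frac{m(\tau(u))}{m(\alpha(u))}\le\Big(\frac2a\Big)^{\omega}.$$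
   Context: Assumption (A) (for reference) in particular provides a strictly decreasing continuous profile $f:(0,\infty)\to(0,\infty)$ of a Lévy density with infinite total mass, which is a bijection of $(0,\infty)$ onto itself; $f^{-1}$ and $(f^2)^{-1}$ denote the inverses of $f$ and $f^2$. *)

theory Defs
  imports "HOL-Analysis.Analysis" "HOL-Library.Extended_Real" "HOL-Library.Liminf_Limsup"
begin

end

theory Submission
  imports Defs
begin

theorem lemma4p1:
  fixes f F m :: "real \<Rightarrow> real" and r0 r1 a \<kappa> \<kappa>' \<omega> :: real
  assumes f_cont: "continuous_on {0<..} f"
    and f_dec: "\<forall>x\<in>{0<..}. \<forall>y\<in>{0<..}. x < y \<longrightarrow> f y < f x"
    and f_bij: "bij_betw f {0<..} {0<..}"
    and F_pos: "\<forall>r>0. F r > 0"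
    and r1: "r1 > 0"
    and F_cont: "continuous_on {r1..} F"
    and F_dec: "\<forall>x\<in>{r1..}. \<forall>y\<in>{r1..}. x < y \<longrightarrow> F y < F x"
    and r0: "r0 > 0"
    and a: "0 < a" "a < 2"
    and F_bounds: "\<forall>r>r0. f r ^ 2 \<le> F r \<and> F r \<le> f r powr a"
    and kappa: "\<kappa> > 0" "\<kappa>' > 0"
    and m_pos: "\<forall>r>0. m r > 0"
    and m_mono: "\<exists>R. mono_on {R..} m"
    and omega: "\<omega> \<ge> 0"
    and star: "\<forall>c>0. \<forall>l\<ge>1.
        Limsup (at_right 0)
          (\<lambda>s. ereal (m (inv_into {0<..} f (c * s powr l)) / m (inv_into {0<..} f s)))
        \<le> ereal (l powr \<omega>)"
  defines "\<alpha> \<equiv> (\<lambda>u. inv_into {0<..} (\<lambda>r. f r ^ 2) (\<kappa> / u))"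
    and "\<tau> \<equiv> (\<lambda>u. inv_into {r1..} F (\<kappa>' / u))"
  shows "1 \<le> Liminf at_top (\<lambda>u. ereal (m (\<tau> u) / m (\<alpha> u)))
    \<and> Liminf at_top (\<lambda>u. ereal (m (\<tau> u) / m (\<alpha> u)))
        \<le> Limsup at_top (\<lambda>u. ereal (m (\<tau> u) / m (\<alpha> u)))
    \<and> Limsup at_top (\<lambda>u. ereal (m (\<tau> u) / m (\<alpha> u))) \<le> ereal ((2 / a) powr \<omega>)"
proof -
  define finv where "finv = inv_into {0<..} f"
  have inj_f: "inj_on f {0<..}" using f_bij bij_betw_imp_inj_on by blast
  have f_pos: "\<And>x. x > 0 \<Longrightarrow> f x > 0" using f_bij bij_betw_apply by fastforce
  have f_surj: "f ` {0<..} = {0<..}" using f_bij bij_betw_imp_surj_on by blast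
  have finv_pos: "\<And>y. y > 0 \<Longrightarrow> finv y > 0"
    unfolding finv_def using f_surj inv_into_into[of _ f "{0<..}"] by auto
  have f_finv: "\<And>y. y > 0 \<Longrightarrow> f (finv y) = y"
    unfolding finv_def using f_surj f_inv_into_f[of _ f "{0<..}"] by auto
  have finv_ge: "\<And>y x. y > 0 \<Longrightarrow> x > 0 \<Longrightarrow> y \<le> f x \<Longrightarrow> x \<le> finv y"
  proof (rule ccontr)
    fix y x :: real assume h: "y > 0" "x > 0" "y \<le> f x" "\<not> x \<le> finv y"
    then have "f x < f (finv y)" using f_dec finv_pos[OF h(1)] by auto
    then show False using h f_finv[OF h(1)] by simp
  qed
  have finv_le: "\<And>y x. y > 0 \<Longrightarrow> x > 0 \<Longrightarrow> f x \<le> y \<Longrightarrow> finv y \<le> x"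
  proof (rule ccontr)
    fix y x :: real assume h: "y > 0" "x > 0" "f x \<le> y" "\<not> finv y \<le> x"
    then have "f (finv y) < f x" using f_dec finv_pos[OF h(1)] by auto
    then show False using h f_finv[OF h(1)] by simp
  qed
  obtain R where R: "mono_on {R..} m" using m_mono by blast
  define R' where "R' = max R 1"
  define R2 where "R2 = max r1 (r0 + 1)"
  define s where "s = (\<lambda>u::real. sqrt (\<kappa> / u))"
  define c1 where "c1 = sqrt (\<kappa>' / \<kappa>)"
  define c2 where "c2 = (\<kappa>' / \<kappa>) powr (1 / a)"
  define l where "l = 2 / a"
  have c1_pos: "c1 > 0" and c2_pos: "c2 > 0" using kappa unfolding c1_def c2_def by auto
  have l1: "l \<ge> 1" using a unfolding l_def by simp
  have R'pos: "R' > 0" unfolding R'_def by simp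
  have fR'pos: "f R' > 0" using f_pos R'pos by simp
  have FR2pos: "F R2 > 0" using F_pos r1 unfolding R2_def by auto
  have inj2: "inj_on (\<lambda>r. f r ^ 2) {0<..}"
  proof (rule inj_onI)
    fix x y :: real assume h: "x \<in> {0<..}" "y \<in> {0<..}" "f x ^ 2 = f y ^ 2"
    have p: "0 \<le> f x" "0 \<le> f y" using h f_pos by (auto intro: less_imp_le)
    have "f x = f y" using power2_eq_iff_nonneg[OF p] h(3) by simp
    then show "x = y" using inj_onD[OF inj_f _ h(1) h(2)] by simp
  qed
  have alpha_eq: "\<And>u. u > 0 \<Longrightarrow> \<alpha> u = finv (s u)"
  proof -
    fix u :: real assume u: "u > 0"
    have sp: "s u > 0" unfolding s_def using u kappa by simp
    have sq: "s u ^ 2 = \<kappa> / u" unfolding s_def using u kappa by simp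
    have e: "(\<lambda>r. f r ^ 2) (finv (s u)) = \<kappa> / u" using f_finv[OF sp] sq by simp
    have "inv_into {0<..} (\<lambda>r. f r ^ 2) (\<kappa> / u) = finv (s u)"
      by (rule inv_into_f_eq[OF inj2]) (use finv_pos[OF sp] e in auto)
    then show "\<alpha> u = finv (s u)" by (simp add: \<alpha>_def)
  qed
  have d0: "\<And>c::real. ((\<lambda>u. c / u) \<longlongrightarrow> 0) at_top"
    by (rule tendsto_divide_0[OF tendsto_const filterlim_at_top_imp_at_infinity[OF filterlim_ident]])
  have hs: "(s \<longlongrightarrow> 0) at_top" unfolding s_def using tendsto_real_sqrt[OF d0[of \<kappa>]] by simp
  have hk: "((\<lambda>u. \<kappa>' / u) \<longlongrightarrow> 0) at_top" by (rule d0)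
  have hcs: "((\<lambda>u. c1 * s u) \<longlongrightarrow> 0) at_top" using tendsto_mult_right_zero[OF hs] by simp
  have sp_ev: "eventually (\<lambda>u. s u > 0) at_top"
    using eventually_gt_at_top[of 0] by eventually_elim (use kappa in \<open>simp add: s_def\<close>)
  have fs: "filterlim s (at_right 0) at_top"
    unfolding filterlim_at using hs sp_ev by (auto elim: eventually_mono)
  have fcs: "filterlim (\<lambda>u. c1 * s u) (at_right 0) at_top"
    unfolding filterlim_at using hcs sp_ev c1_pos by (auto elim: eventually_mono)
  have E2: "eventually (\<lambda>u. \<kappa>' / u < F R2) at_top" using order_tendstoD(2)[OF hk FR2pos] .
  have E3: "eventually (\<lambda>u. c1 * s u < f R') at_top" using order_tendstoD(2)[OF hcs fR'pos] .
  have EV: "eventually (\<lambda>u. m (finv (c1 * s u)) / m (finv (s u)) \<le> m (\<tau> u) / m (\<alpha> u)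
       \<and> m (\<tau> u) / m (\<alpha> u) \<le> m (finv (c2 * s u powr l)) / m (finv (s u))
       \<and> m (\<tau> u) / m (\<alpha> u) > 0) at_top"
    using eventually_gt_at_top[of 0] E2 E3
  proof eventually_elim
    case (elim u)
    have u: "u > 0" using elim by simp
    have sp: "s u > 0" unfolding s_def using u kappa by simp
    have ku: "\<kappa>' / u > 0" using u kappa by simp
    have R2r1: "R2 \<ge> r1" unfolding R2_def by simp
    obtain r where r: "r \<ge> R2" "F r < \<kappa>' / u"
    proof -
      define \<delta> where "\<delta> = (\<kappa>' / (2 * u)) powr (1 / a)"
      have dpos: "\<delta> > 0" unfolding \<delta>_def using u kappa by simp
      have da: "\<delta> powr a = \<kappa>' / (2 * u)" unfolding \<delta>_def using u kappa a
        by (simp add: powr_powr)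
      define r where "r = max R2 (finv \<delta>)"
      have rpos: "r > 0" unfolding r_def R2_def using r0 by auto
      have rr0: "r > r0" unfolding r_def R2_def by auto
      have "f r \<le> \<delta>"
      proof (cases "r = finv \<delta>")
        case True then show ?thesis using f_finv[OF dpos] by simp
      next
        case False then have "finv \<delta> < r" unfolding r_def by auto
        then have "f r < f (finv \<delta>)" using f_dec finv_pos[OF dpos] rpos by auto
        then show ?thesis using f_finv[OF dpos] by simp
      qed
      then have "f r powr a \<le> \<delta> powr a" using f_pos[OF rpos] a by (simp add: powr_mono2)
      then have "F r \<le> \<kappa>' / (2 * u)" using F_bounds rr0 da by force
      also have "\<dots> < \<kappa>' / u" using u kappa by (simp add: field_simps)
      finally show ?thesis using that[of r] unfolding r_def by simp
    qed
    have cont: "continuous_on {R2..r} F" using continuous_on_subset[OF F_cont] R2r1 by auto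
    have FR2: "\<kappa>' / u \<le> F R2" using elim by simp
    obtain x where x: "R2 \<le> x" "x \<le> r" "F x = \<kappa>' / u"
      using IVT2'[of F r "\<kappa>' / u" R2, OF less_imp_le[OF r(2)] FR2 r(1) cont] by blast
    have inimg: "\<kappa>' / u \<in> F ` {r1..}"
      by (rule image_eqI[where x=x]) (use x R2r1 in auto)
    have tF: "F (\<tau> u) = \<kappa>' / u" and tin: "\<tau> u \<ge> r1" unfolding \<tau>_def
      using f_inv_into_f[OF inimg] inv_into_into[OF inimg] by auto
    have tR2: "\<tau> u > R2"
    proof (rule ccontr)
      assume "\<not> \<tau> u > R2"
      then have "F R2 \<le> F (\<tau> u)" using F_dec[rule_format, of "\<tau> u" R2] tin R2r1
        by (cases "\<tau> u = R2") (auto simp: not_less)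
      then show False using tF elim by simp
    qed
    have tr0: "\<tau> u > r0" using tR2 unfolding R2_def by simp
    have tpos: "\<tau> u > 0" using tr0 r0 by simp
    have ftpos: "f (\<tau> u) > 0" using f_pos[OF tpos] .
    have b1: "f (\<tau> u) ^ 2 \<le> \<kappa>' / u" and b2: "\<kappa>' / u \<le> f (\<tau> u) powr a"
      using F_bounds tr0 tF by auto
    have c1s: "(c1 * s u) ^ 2 = \<kappa>' / u" unfolding c1_def s_def using u kappa
      by (simp add: power_mult_distrib)
    have "f (\<tau> u) \<le> c1 * s u" using b1 c1s c1_pos sp
      by (metis less_imp_le mult_pos_pos power2_le_imp_le)
    then have low: "finv (c1 * s u) \<le> \<tau> u" using finv_le c1_pos sp tpos by simp
    have c2s: "(\<kappa>' / u) powr (1 / a) = c2 * s u powr l"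
    proof -
      have "\<kappa>' / u = (\<kappa>' / \<kappa>) * (s u powr 2)" unfolding s_def using u kappa
        by (simp add: powr_half_sqrt[symmetric] powr_powr)
      then have "(\<kappa>' / u) powr (1 / a) = ((\<kappa>' / \<kappa>) * (s u powr 2)) powr (1 / a)"
        by (simp only:)
      also have "\<dots> = (\<kappa>' / \<kappa>) powr (1 / a) * (s u powr 2) powr (1 / a)"
        by (rule powr_mult)
      also have "\<dots> = c2 * s u powr l" unfolding c2_def l_def by (simp add: powr_powr)
      finally show ?thesis .
    qed
    have "(\<kappa>' / u) powr (1 / a) \<le> (f (\<tau> u) powr a) powr (1 / a)"
      using b2 ku a by (simp add: powr_mono2)
    also have "\<dots> = f (\<tau> u)" using ftpos a by (simp add: powr_powr)
    finally have "c2 * s u powr l \<le> f (\<tau> u)" using c2s by simp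
    moreover have "c2 * s u powr l > 0" using c2_pos sp by simp
    ultimately have up: "\<tau> u \<le> finv (c2 * s u powr l)" using finv_ge tpos by simp
    have "R' \<le> finv (c1 * s u)" using finv_ge[of "c1 * s u" R'] elim c1_pos sp R'pos by simp
    then have RR: "R \<le> finv (c1 * s u)" unfolding R'_def by simp
    have m1: "m (finv (c1 * s u)) \<le> m (\<tau> u)"
      using mono_onD[OF R, of "finv (c1 * s u)" "\<tau> u"] RR low by simp
    have m2: "m (\<tau> u) \<le> m (finv (c2 * s u powr l))"
      using mono_onD[OF R, of "\<tau> u" "finv (c2 * s u powr l)"] RR low up by simp
    have ma: "m (\<alpha> u) = m (finv (s u))" using alpha_eq[OF u] by simp
    have mapos: "m (finv (s u)) > 0" using m_pos finv_pos[OF sp] by simp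
    have mtpos: "m (\<tau> u) > 0" using m_pos tpos by simp
    show ?case using m1 m2 ma mapos mtpos by (simp add: divide_right_mono)
  qed
  have upper: "Limsup at_top (\<lambda>u. ereal (m (\<tau> u) / m (\<alpha> u))) \<le> ereal ((2 / a) powr \<omega>)"
    unfolding Limsup_le_iff
  proof (intro allI impI)
    fix y :: ereal assume y: "y > ereal ((2 / a) powr \<omega>)"
    have "Limsup (at_right 0) (\<lambda>t. ereal (m (finv (c2 * t powr l)) / m (finv t))) < y"
      using star c2_pos l1 y unfolding finv_def l_def by (meson le_less_trans)
    then have "eventually (\<lambda>t. ereal (m (finv (c2 * t powr l)) / m (finv t)) < y) (at_right 0)"
      by (rule Limsup_lessD)
    then have "eventually (\<lambda>u. ereal (m (finv (c2 * s u powr l)) / m (finv (s u))) < y) at_top"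
      using fs unfolding filterlim_iff by blast
    then show "eventually (\<lambda>u. y > ereal (m (\<tau> u) / m (\<alpha> u))) at_top"
      using EV
    proof eventually_elim
      case (elim u)
      then have "ereal (m (\<tau> u) / m (\<alpha> u)) \<le> ereal (m (finv (c2 * s u powr l)) / m (finv (s u)))"
        by simp
      then show ?case using elim(1) by (rule le_less_trans)
    qed
  qed
  have lower: "1 \<le> Liminf at_top (\<lambda>u. ereal (m (\<tau> u) / m (\<alpha> u)))"
    unfolding le_Liminf_iff
  proof (intro allI impI)
    fix y :: ereal assume y: "y < 1"
    show "eventually (\<lambda>u. y < ereal (m (\<tau> u) / m (\<alpha> u))) at_top"
    proof (cases "y \<le> 0")
      case True
      show ?thesis using EV
      proof eventually_elim
        case (elim u)
        then have "0 < ereal (m (\<tau> u) / m (\<alpha> u))" by simp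
        then show ?case by (rule le_less_trans[OF True])
      qed
    next
      case False
      then obtain r where r: "y = ereal r" "0 < r" "r < 1" using y
        by (cases y) auto
      have "Limsup (at_right 0) (\<lambda>t. ereal (m (finv ((1 / c1) * t powr 1)) / m (finv t))) \<le> ereal (1 powr \<omega>)"
        using star[rule_format, of "1 / c1" 1] c1_pos unfolding finv_def by simp
      also have "\<dots> < ereal (1 / r)" using r by simp
      finally have "eventually (\<lambda>t. ereal (m (finv ((1 / c1) * t powr 1)) / m (finv t)) < ereal (1 / r)) (at_right 0)"
        by (rule Limsup_lessD)
      then have "eventually (\<lambda>u. ereal (m (finv ((1 / c1) * (c1 * s u) powr 1)) / m (finv (c1 * s u))) < ereal (1 / r)) at_top"
        using fcs unfolding filterlim_iff by blast
      then show ?thesis using EV sp_ev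
      proof eventually_elim
        case (elim u)
        have "(1 / c1) * (c1 * s u) powr 1 = s u" using elim c1_pos by simp
        then have h: "m (finv (s u)) / m (finv (c1 * s u)) < 1 / r" using elim by simp
        have p1: "m (finv (s u)) > 0" using m_pos finv_pos elim by simp
        have p2: "m (finv (c1 * s u)) > 0" using m_pos finv_pos elim c1_pos by simp
        have "r < m (finv (c1 * s u)) / m (finv (s u))" using h p1 p2 r
          by (simp add: field_simps)
        then show ?case using elim r by simp
      qed
    qed
  qed
  have mid: "Liminf at_top (\<lambda>u. ereal (m (\<tau> u) / m (\<alpha> u)))
        \<le> Limsup at_top (\<lambda>u. ereal (m (\<tau> u) / m (\<alpha> u)))"
    by (rule Liminf_le_Limsup) simp
  show ?thesis using lower upper mid by blast
qed

end
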